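(* Let $A$ and $B$ be convex bodies in $\mathbb{R}^2$ and let $A'$ be a vertical stretching of $A$. Let $m=|\pi(A)|$ and $n=|\pi(B)|$ be the lengths of the projections onto the first coordinate. Then $$|A+B|=\left(\frac{|A|}{m}+\frac{|B|}{n}\right)(m+n)$$ if and only if $$|A'+B|=\left(\frac{|A'|}{m}+\frac{|B|}{n}\right)(m+n).$$
   Context: A convex body is a compact convex set with nonempty interior; $|X|$ denotes area; $\pi(x,y)=x$. A convex body $A$ with $\pi(A)=[0,m]$ can be written $A=\{(x,y): x\in[0,m],\ u_A(x)\le y\le v_A(x)\}$ with $u_A$ convex and $v_A$ concave. A vertical stretching of $A$ of amount $h\ge 0$ is the set $\{(x,y): x\in\pi(A),\ u_A(x)\le y\le v_A(x)+h\}$. *)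

theory Defs
  imports "HOL-Analysis.Analysis"
begin

definition convex_body :: "(real \<times> real) set \<Rightarrow> bool" where
  "convex_body K \<longleftrightarrow> compact K \<and> convex K \<and> interior K \<noteq> {}"

definition minkowski_sum :: "(real \<times> real) set \<Rightarrow> (real \<times> real) set \<Rightarrow> (real \<times> real) set" where
  "minkowski_sum A B = {a + b | a b. a \<in> A \<and> b \<in> B}"

definition area :: "(real \<times> real) set \<Rightarrow> real" where
  "area X = measure lebesgue X"

definition proj1 :: "(real \<times> real) set \<Rightarrow> real set" where
  "proj1 A = fst ` A"

definition lower_fun :: "(real \<times> real) set \<Rightarrow> real \<Rightarrow> real" where
  "lower_fun A x = Inf {y. (x, y) \<in> A}"

definition upper_fun :: "(real \<times> real) set \<Rightarrow> real \<Rightarrow> real" where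
  "upper_fun A x = Sup {y. (x, y) \<in> A}"

definition vertical_stretching :: "(real \<times> real) set \<Rightarrow> real \<Rightarrow> (real \<times> real) set" where
  "vertical_stretching A h =
     {(x, y). x \<in> proj1 A \<and> lower_fun A x \<le> y \<and> y \<le> upper_fun A x + h}"

end

theory Submission
  imports Defs
begin

lemma fiber_interval:
  fixes K :: "(real \<times> real) set"
  assumes "compact K" "convex K"
  shows "\<exists>c d. {y. (x,y) \<in> K} = {c..d}"
proof -
  let ?F = "{y. (x,y) \<in> K}"
  have cl: "closed ?F"
  proof -
    have "closed (Pair x -` K)"
      by (rule continuous_closed_vimage) (auto simp: compact_imp_closed assms intro!: continuous_intros)
    thus ?thesis by (simp add: vimage_def)
  qed
  have "?F \<subseteq> snd ` K" by force
  moreover have "bounded (snd ` K)"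
    using assms(1) by (simp add: compact_imp_bounded bounded_snd)
  ultimately have "bounded ?F" by (rule bounded_subset[rotated])
  with cl have "compact ?F" by (simp add: compact_eq_bounded_closed)
  moreover have "convex ?F"
    unfolding convex_def
  proof (intro allI impI ballI)
    fix a b and u v :: real
    assume "a \<in> ?F" "b \<in> ?F" "0 \<le> u" "0 \<le> v" "u + v = 1"
    then have "u *\<^sub>R (x,a) + v *\<^sub>R (x,b) \<in> K" using assms(2) unfolding convex_def by blast
    moreover have "u *\<^sub>R (x,a) + v *\<^sub>R (x,b) = (x, u *\<^sub>R a + v *\<^sub>R b)"
      using \<open>u + v = 1\<close> by (simp add: algebra_simps) (metis distrib_right mult_1 mult.commute)
    ultimately show "u *\<^sub>R a + v *\<^sub>R b \<in> ?F" by simp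
  qed
  ultimately show ?thesis using connected_compact_interval_1 convex_connected by blast
qed

definition vseg :: "real \<Rightarrow> (real \<times> real) set" where
  "vseg h = {0} \<times> {0..h}"

lemma fiber_sum:
  fixes K :: "(real \<times> real) set"
  assumes "compact K" "convex K" "h \<ge> 0"
  shows "emeasure lborel {y. (x,y) \<in> minkowski_sum K (vseg h)}
     = emeasure lborel {y. (x,y) \<in> K} + ennreal h * indicator (fst ` K) x"
proof -
  obtain c d where cd: "{y. (x,y) \<in> K} = {c..d}" using fiber_interval[OF assms(1,2)] by blast
  have mem: "(x,y) \<in> K \<longleftrightarrow> c \<le> y \<and> y \<le> d" for y using cd by auto
  have eq: "{y. (x,y) \<in> minkowski_sum K (vseg h)} = (if c \<le> d then {c..d+h} else {})"
  proof (cases "c \<le> d")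
    case True
    have "y \<in> {y. (x,y) \<in> minkowski_sum K (vseg h)} \<longleftrightarrow> y \<in> {c..d+h}" for y
    proof
      assume "y \<in> {y. (x,y) \<in> minkowski_sum K (vseg h)}"
      then obtain a b where ab: "(x,y) = a + b" "a \<in> K" "b \<in> vseg h"
        unfolding minkowski_sum_def by blast
      then obtain t where b: "b = (0,t)" "0 \<le> t" "t \<le> h" unfolding vseg_def by auto
      with ab have "a = (x, y - t)" by (cases a) auto
      with ab mem b show "y \<in> {c..d+h}" by auto
    next
      assume y: "y \<in> {c..d+h}"
      show "y \<in> {y. (x,y) \<in> minkowski_sum K (vseg h)}"
      proof (cases "y \<le> d")
        case True
        have "(x,y) = (x,y) + (0,0)" by simp
        moreover have "(x,y) \<in> K" using mem y True by auto
        moreover have "(0,0) \<in> vseg h" using assms(3) by (simp add: vseg_def)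
        ultimately show ?thesis unfolding minkowski_sum_def by blast
      next
        case False
        have "(x,y) = (x,d) + (0,y-d)" by simp
        moreover have "(x,d) \<in> K" using mem \<open>c \<le> d\<close> by auto
        moreover have "(0,y-d) \<in> vseg h" using y False by (simp add: vseg_def)
        ultimately show ?thesis unfolding minkowski_sum_def by blast
      qed
    qed
    then have "{y. (x,y) \<in> minkowski_sum K (vseg h)} = {c..d+h}" by (rule set_eqI)
    with True show ?thesis by simp
  next
    case False
    have "(x,y) \<notin> minkowski_sum K (vseg h)" for y
    proof
      assume "(x,y) \<in> minkowski_sum K (vseg h)"
      then obtain a b where ab: "(x,y) = a + b" "a \<in> K" "b \<in> vseg h"
        unfolding minkowski_sum_def by blast
      then obtain t where b: "b = (0,t)" unfolding vseg_def by auto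
      with ab have "a = (x, y - t)" by (cases a) auto
      with ab mem False show False by auto
    qed
    then show ?thesis using False by auto
  qed
  have fk: "x \<in> fst ` K \<longleftrightarrow> c \<le> d"
  proof
    assume "x \<in> fst ` K"
    then obtain y where "(x,y) \<in> K" by force
    then show "c \<le> d" using mem by auto
  next
    assume "c \<le> d" then have "(x,c) \<in> K" using mem by auto
    then show "x \<in> fst ` K" by force
  qed
  show ?thesis
  proof (cases "c \<le> d")
    case True
    then have "emeasure lborel {y. (x,y) \<in> minkowski_sum K (vseg h)} = ennreal (d + h - c)"
      using eq assms(3) by (simp add: emeasure_lborel_Icc_eq)
    also have "\<dots> = ennreal (d - c) + ennreal h" using True assms(3) by (subst ennreal_plus[symmetric]) (auto simp: algebra_simps)
    finally show ?thesis using True cd fk by (simp add: emeasure_lborel_Icc_eq)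
  next
    case False
    then show ?thesis using eq cd fk by simp
  qed
qed

lemma pair_alt:
  fixes X :: "(real \<times> real) set"
  assumes "closed X"
  shows "emeasure lborel X = (\<integral>\<^sup>+x. emeasure lborel {y. (x,y) \<in> X} \<partial>lborel)"
    and "(\<lambda>x. emeasure lborel {y. (x,y) \<in> X}) \<in> borel_measurable lborel"
proof -
  have S: "X \<in> sets (lborel \<Otimes>\<^sub>M lborel)"
    by (simp only: lborel_prod) (simp add: borel_closed assms)
  have "emeasure (lborel::(real\<times>real) measure) X = emeasure (lborel \<Otimes>\<^sub>M lborel) X"
    by (simp only: lborel_prod)
  also have "\<dots> = (\<integral>\<^sup>+x. emeasure lborel (Pair x -` X) \<partial>lborel)"
    by (rule lborel.emeasure_pair_measure_alt[OF S])
  finally show "emeasure lborel X = (\<integral>\<^sup>+x. emeasure lborel {y. (x,y) \<in> X} \<partial>lborel)"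
    by (simp add: vimage_def)
  show "(\<lambda>x. emeasure lborel {y. (x,y) \<in> X}) \<in> borel_measurable lborel"
    using lborel.measurable_emeasure_Pair[OF S] by (simp add: vimage_def)
qed

lemma stretch_measure:
  fixes K :: "(real \<times> real) set"
  assumes "compact K" "convex K" "h \<ge> 0"
  shows "area (minkowski_sum K (vseg h)) = area K + h * measure lebesgue (fst ` K)"
proof -
  let ?S = "minkowski_sum K (vseg h)"
  have cS: "compact ?S" unfolding minkowski_sum_def vseg_def
    by (intro compact_sums assms compact_Times) auto
  have cF: "compact (fst ` K)" using assms(1) by (intro compact_continuous_image continuous_intros)
  have "emeasure lborel ?S = (\<integral>\<^sup>+x. emeasure lborel {y. (x,y) \<in> K} + ennreal h * indicator (fst ` K) x \<partial>lborel)"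
    using pair_alt(1)[OF compact_imp_closed[OF cS]] fiber_sum[OF assms] by simp
  also have "\<dots> = (\<integral>\<^sup>+x. emeasure lborel {y. (x,y) \<in> K} \<partial>lborel) + (\<integral>\<^sup>+x. ennreal h * indicator (fst ` K) x \<partial>lborel)"
    by (rule nn_integral_add) (use pair_alt(2)[OF compact_imp_closed[OF assms(1)]] in
          \<open>auto simp: borel_closed compact_imp_closed[OF cF]\<close>)
  also have "\<dots> = emeasure lborel K + ennreal h * emeasure lborel (fst ` K)"
    by (simp add: pair_alt(1)[OF compact_imp_closed[OF assms(1)]] nn_integral_cmult_indicator
         borel_closed compact_imp_closed[OF cF])
  finally have E: "emeasure lborel ?S = emeasure lborel K + ennreal h * emeasure lborel (fst ` K)" .
  have f1: "emeasure lborel ?S = ennreal (measure lborel ?S)"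
    by (rule emeasure_eq_ennreal_measure) (use emeasure_compact_finite[OF cS] in auto)
  have f2: "emeasure lborel K = ennreal (measure lborel K)"
    by (rule emeasure_eq_ennreal_measure) (use emeasure_compact_finite[OF assms(1)] in auto)
  have f3: "emeasure lborel (fst ` K) = ennreal (measure lborel (fst ` K))"
    by (rule emeasure_eq_ennreal_measure) (use emeasure_compact_finite[OF cF] in auto)
  have "ennreal (measure lborel ?S) = ennreal (measure lborel K + h * measure lborel (fst ` K))"
    using E f1 f2 f3 assms(3) by (simp add: ennreal_plus ennreal_mult)
  then have "measure lborel ?S = measure lborel K + h * measure lborel (fst ` K)"
    using assms(3) by (subst (asm) ennreal_inj) auto
  moreover have "measure lebesgue ?S = measure lborel ?S"
    using cS by (simp add: borel_closed compact_imp_closed)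
  moreover have "measure lebesgue K = measure lborel K"
    using assms(1) by (simp add: borel_closed compact_imp_closed)
  moreover have "measure lebesgue (fst ` K) = measure lborel (fst ` K)"
    using cF by (simp add: borel_closed compact_imp_closed)
  ultimately show ?thesis unfolding area_def by simp
qed

lemma fiber_sum_set:
  fixes K :: "(real \<times> real) set"
  assumes "h \<ge> 0" and cd: "{y. (x,y) \<in> K} = {c..d}"
  shows "{y. (x,y) \<in> minkowski_sum K (vseg h)} = (if c \<le> d then {c..d+h} else {})"
proof -
  have mem: "(x,y) \<in> K \<longleftrightarrow> c \<le> y \<and> y \<le> d" for y using cd by auto
  show ?thesis
  proof (cases "c \<le> d")
    case True
    have "y \<in> {y. (x,y) \<in> minkowski_sum K (vseg h)} \<longleftrightarrow> y \<in> {c..d+h}" for y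
    proof
      assume "y \<in> {y. (x,y) \<in> minkowski_sum K (vseg h)}"
      then obtain a b where ab: "(x,y) = a + b" "a \<in> K" "b \<in> vseg h"
        unfolding minkowski_sum_def by blast
      then obtain t where b: "b = (0,t)" "0 \<le> t" "t \<le> h" unfolding vseg_def by auto
      with ab have "a = (x, y - t)" by (cases a) auto
      with ab mem b show "y \<in> {c..d+h}" by auto
    next
      assume y: "y \<in> {c..d+h}"
      show "y \<in> {y. (x,y) \<in> minkowski_sum K (vseg h)}"
      proof (cases "y \<le> d")
        case True
        have "(x,y) = (x,y) + (0,0)" by simp
        moreover have "(x,y) \<in> K" using mem y True by auto
        moreover have "(0,0) \<in> vseg h" using assms(1) by (simp add: vseg_def)
        ultimately show ?thesis unfolding minkowski_sum_def by blast
      next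
        case False
        have "(x,y) = (x,d) + (0,y-d)" by simp
        moreover have "(x,d) \<in> K" using mem \<open>c \<le> d\<close> by auto
        moreover have "(0,y-d) \<in> vseg h" using y False by (simp add: vseg_def)
        ultimately show ?thesis unfolding minkowski_sum_def by blast
      qed
    qed
    then have "{y. (x,y) \<in> minkowski_sum K (vseg h)} = {c..d+h}" by (rule set_eqI)
    with True show ?thesis by simp
  next
    case False
    have "(x,y) \<notin> minkowski_sum K (vseg h)" for y
    proof
      assume "(x,y) \<in> minkowski_sum K (vseg h)"
      then obtain a b where ab: "(x,y) = a + b" "a \<in> K" "b \<in> vseg h"
        unfolding minkowski_sum_def by blast
      then obtain t where b: "b = (0,t)" unfolding vseg_def by auto
      with ab have "a = (x, y - t)" by (cases a) auto
      with ab mem False show False by auto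
    qed
    then show ?thesis using False by auto
  qed
qed

lemma vs_eq:
  fixes A :: "(real \<times> real) set"
  assumes "compact A" "convex A" "h \<ge> 0"
  shows "vertical_stretching A h = minkowski_sum A (vseg h)"
proof (rule set_eqI)
  fix p :: "real \<times> real"
  obtain x y where p: "p = (x,y)" by (cases p)
  obtain c d where cd: "{y. (x,y) \<in> A} = {c..d}" using fiber_interval[OF assms(1,2)] by blast
  have F: "{y. (x,y) \<in> minkowski_sum A (vseg h)} = (if c \<le> d then {c..d+h} else {})"
    by (rule fiber_sum_set[OF assms(3) cd])
  have fk: "x \<in> fst ` A \<longleftrightarrow> c \<le> d"
  proof
    assume "x \<in> fst ` A"
    then obtain y' where "(x,y') \<in> A" by force
    then have "y' \<in> {c..d}" using cd by blast
    then show "c \<le> d" by auto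
  next
    assume "c \<le> d" then have "(x,c) \<in> A" using cd by auto
    then show "x \<in> fst ` A" by force
  qed
  show "p \<in> vertical_stretching A h \<longleftrightarrow> p \<in> minkowski_sum A (vseg h)"
  proof (cases "c \<le> d")
    case True
    have L: "lower_fun A x = c" by (simp add: lower_fun_def cd True)
    have U: "upper_fun A x = d" by (simp add: upper_fun_def cd True)
    have "y \<in> {y. (x,y) \<in> minkowski_sum A (vseg h)} \<longleftrightarrow> y \<in> {c..d+h}"
      using F True by simp
    then have M: "(x,y) \<in> minkowski_sum A (vseg h) \<longleftrightarrow> c \<le> y \<and> y \<le> d+h" by simp
    have V: "(x,y) \<in> vertical_stretching A h \<longleftrightarrow> c \<le> y \<and> y \<le> d+h"
      unfolding vertical_stretching_def proj1_def using fk True L U by simp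
    show ?thesis using M V p by simp
  next
    case False
    have "y \<notin> {y. (x,y) \<in> minkowski_sum A (vseg h)}"
      using F False by simp
    then have M: "(x,y) \<notin> minkowski_sum A (vseg h)" by simp
    have V: "(x,y) \<notin> vertical_stretching A h"
      unfolding vertical_stretching_def proj1_def using fk False by simp
    show ?thesis using M V p by simp
  qed
qed

lemma sum_assoc:
  "minkowski_sum (minkowski_sum A V) B = minkowski_sum (minkowski_sum A B) V"
  unfolding minkowski_sum_def
proof (rule set_eqI, rule iffI)
  fix z assume "z \<in> {a + b |a b. a \<in> {a + b |a b. a \<in> A \<and> b \<in> V} \<and> b \<in> B}"
  then obtain a v b where "z = (a + v) + b" "a \<in> A" "v \<in> V" "b \<in> B" by blast
  moreover have "(a + v) + b = (a + b) + v" by (simp add: algebra_simps)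
  ultimately show "z \<in> {a + b |a b. a \<in> {a + b |a b. a \<in> A \<and> b \<in> B} \<and> b \<in> V}" by blast
next
  fix z assume "z \<in> {a + b |a b. a \<in> {a + b |a b. a \<in> A \<and> b \<in> B} \<and> b \<in> V}"
  then obtain a v b where "z = (a + b) + v" "a \<in> A" "v \<in> V" "b \<in> B" by blast
  then have "z = (a + v) + b" by (simp add: algebra_simps)
  with \<open>a \<in> A\<close> \<open>v \<in> V\<close> \<open>b \<in> B\<close>
  show "z \<in> {a + b |a b. a \<in> {a + b |a b. a \<in> A \<and> b \<in> V} \<and> b \<in> B}" by blast
qed

lemma proj_interval:
  fixes K :: "(real \<times> real) set"
  assumes "compact K" "convex K" "K \<noteq> {}"
  shows "\<exists>a b. a \<le> b \<and> fst ` K = {a..b}"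
proof -
  have c: "compact (fst ` K)" using assms(1) by (intro compact_continuous_image continuous_intros)
  have v: "convex (fst ` K)" using assms(2) by (rule convex_linear_image[OF linear_fst])
  have "connected (fst ` K)" using v by (rule convex_connected)
  then obtain a b where ab: "fst ` K = {a..b}"
    using c connected_compact_interval_1 by meson
  have "fst ` K \<noteq> {}" using assms(3) by simp
  then have "{a..b} \<noteq> {}" using ab by simp
  then have "a \<le> b" by simp
  with ab show ?thesis by blast
qed

lemma interval_sum:
  fixes a1 a2 b1 b2 :: real
  assumes "a1 \<le> a2" "b1 \<le> b2"
  shows "{z. \<exists>s\<in>{a1..a2}. \<exists>t\<in>{b1..b2}. z = s + t} = {a1+b1..a2+b2}"
proof (rule set_eqI, rule iffI)
  fix z assume "z \<in> {z. \<exists>s\<in>{a1..a2}. \<exists>t\<in>{b1..b2}. z = s + t}"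
  then obtain s t where "s \<in> {a1..a2}" "t \<in> {b1..b2}" "z = s + t" by blast
  then show "z \<in> {a1+b1..a2+b2}" by simp
next
  fix z assume z: "z \<in> {a1+b1..a2+b2}"
  define s where "s = min a2 (z - b1)"
  have s1: "s \<in> {a1..a2}" using z assms unfolding s_def by simp
  have s2: "z - s \<in> {b1..b2}" using z assms unfolding s_def by (simp add: min_def)
  have "\<exists>t\<in>{b1..b2}. z = s + t" using s2 by (intro bexI[of _ "z - s"]) simp_all
  then have "\<exists>s\<in>{a1..a2}. \<exists>t\<in>{b1..b2}. z = s + t" using s1 by (rule bexI)
  then show "z \<in> {z. \<exists>s\<in>{a1..a2}. \<exists>t\<in>{b1..b2}. z = s + t}" by (rule CollectI)
qed

lemma proj_sum:
  "fst ` minkowski_sum A B = {z. \<exists>s\<in>fst ` A. \<exists>t\<in>fst ` B. z = s + t}"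
proof (rule set_eqI, rule iffI)
  fix z assume "z \<in> fst ` minkowski_sum A B"
  then obtain a b where "z = fst (a + b)" "a \<in> A" "b \<in> B" unfolding minkowski_sum_def by blast
  then show "z \<in> {z. \<exists>s\<in>fst ` A. \<exists>t\<in>fst ` B. z = s + t}" by auto
next
  fix z assume "z \<in> {z. \<exists>s\<in>fst ` A. \<exists>t\<in>fst ` B. z = s + t}"
  then obtain a b where ab: "z = fst a + fst b" "a \<in> A" "b \<in> B" by blast
  then have "a + b \<in> minkowski_sum A B" unfolding minkowski_sum_def by blast
  moreover have "z = fst (a + b)" using ab by simp
  ultimately show "z \<in> fst ` minkowski_sum A B" by blast
qed

lemma interior_wide:
  fixes A :: "(real \<times> real) set"
  assumes "interior A \<noteq> {}" "fst ` A = {a..b}"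
  shows "a < b"
proof -
  obtain p where "p \<in> interior A" using assms(1) by blast
  then obtain e where e: "e > 0" "ball p e \<subseteq> A" by (auto simp: mem_interior)
  have "p + (e/2, 0) \<in> ball p e" "p - (e/2, 0) \<in> ball p e"
    using e(1) by (auto simp: dist_norm norm_Pair)
  then have i1: "p + (e/2, 0) \<in> A" and i2: "p - (e/2, 0) \<in> A" using e(2) by auto
  have "fst (p + (e/2, 0)) \<in> fst ` A" using i1 by (rule imageI)
  moreover have "fst (p - (e/2, 0)) \<in> fst ` A" using i2 by (rule imageI)
  ultimately have "fst (p + (e/2, 0)) \<in> fst ` A" "fst (p - (e/2, 0)) \<in> fst ` A" by blast+
  then have "fst p + e/2 \<in> {a..b}" "fst p - e/2 \<in> {a..b}"
    using assms(2) by simp_all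
  then show ?thesis using e(1) by auto
qed

theorem lemma4p1:
  fixes A B A' :: "(real \<times> real) set" and h :: real
  assumes "convex_body A" and "convex_body B"
    and "h \<ge> 0" and "A' = vertical_stretching A h"
  defines "m \<equiv> measure lebesgue (proj1 A)"
    and "n \<equiv> measure lebesgue (proj1 B)"
  shows "area (minkowski_sum A B) = (area A / m + area B / n) * (m + n)
     \<longleftrightarrow> area (minkowski_sum A' B) = (area A' / m + area B / n) * (m + n)"
proof -
  have A: "compact A" "convex A" "interior A \<noteq> {}" using assms(1) by (auto simp: convex_body_def)
  have B: "compact B" "convex B" "interior B \<noteq> {}" using assms(2) by (auto simp: convex_body_def)
  have neA: "A \<noteq> {}" using A(3) interior_subset by blast
  have neB: "B \<noteq> {}" using B(3) interior_subset by blast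
  obtain a1 a2 where a: "a1 \<le> a2" "fst ` A = {a1..a2}" using proj_interval[OF A(1,2) neA] by blast
  obtain b1 b2 where b: "b1 \<le> b2" "fst ` B = {b1..b2}" using proj_interval[OF B(1,2) neB] by blast
  have m: "m = a2 - a1" unfolding m_def proj1_def using a by simp
  have n: "n = b2 - b1" unfolding n_def proj1_def using b by simp
  have mpos: "m > 0" using interior_wide[OF A(3) a(2)] m by simp
  have AB_eq: "minkowski_sum A B = (\<Union>x\<in>A. \<Union>y\<in>B. {x + y})" unfolding minkowski_sum_def by blast
  have cAB: "compact (minkowski_sum A B)" unfolding minkowski_sum_def by (rule compact_sums[OF A(1) B(1)])
  have vAB: "convex (minkowski_sum A B)" unfolding AB_eq by (rule convex_sums[OF A(2) B(2)])
  have pAB: "measure lebesgue (fst ` minkowski_sum A B) = m + n"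
    unfolding proj_sum a(2) b(2) interval_sum[OF a(1) b(1)] m n using a(1) b(1) by simp
  have A'eq: "A' = minkowski_sum A (vseg h)" using vs_eq[OF A(1,2) assms(3)] assms(4) by simp
  have e1: "area A' = area A + h * m"
    unfolding A'eq stretch_measure[OF A(1,2) assms(3)] m_def proj1_def ..
  have "minkowski_sum A' B = minkowski_sum (minkowski_sum A B) (vseg h)"
    unfolding A'eq by (rule sum_assoc)
  then have e2: "area (minkowski_sum A' B) = area (minkowski_sum A B) + h * (m + n)"
    using stretch_measure[OF cAB vAB assms(3)] pAB by simp
  have e3: "(area A' / m + area B / n) * (m + n) = (area A / m + area B / n) * (m + n) + h * (m + n)"
    unfolding e1 using mpos by (simp add: field_simps)
  show ?thesis unfolding e2 e3 by linarith
qed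

end
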